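(* Let $1/q$ be a prime power, $\Bbbk=\mathbb{F}_{1/q}$, $n=4$, $\alpha=\beta=(1,1,1,1)$. Let $M$ and $M'$ be the $4\times4$ permutation matrices of $3412$ and $1432$ respectively (note $M_{4,4}=M'_{4,4}=0$). Let $G(M)$ be the random growth diagram obtained from a uniformly random $(F,F',N)\in\Omega_M$, and similarly $G(M')$. Conditioned on $G(M)_{3,3}=(2)$, $G(M)_{3,4}=G(M)_{4,3}=(2,1)$, we have $G(M)_{4,4}=(2,2)$ with probability $1$; conditioned on $G(M')_{3,3}=(2)$, $G(M')_{3,4}=G(M')_{4,3}=(2,1)$, we have $G(M')_{4,4}=(3,1)$ with probability $1$. In particular, the distribution of the entry $(i,j)$ of the growth diagram is not determined by the entries at $(i-1,j-1),(i-1,j),(i,j-1)$ together with $M_{i,j}$.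
   Context: Permutation matrix of $w\in S_4$: $\mathring{w}_{a,b}=\delta_{a,w(b)}$. $\mathrm{Fl}_{(1,1,1,1)}$: complete flags $0=F_0\subset F_1\subset\cdots\subset F_4=\Bbbk^4$; $(F,F')$ has relative position $M$ if $\dim(F_i\cap F'_j)=\sum_{i'\le i,j'\le j}M_{i',j'}$. $N\in\mathfrak{gl}_4$ is strictly compatible with $F$ if $N(F_i)\subseteq F_{i-1}$. $\Omega_M$: set of triples $(F,F',N)$ of complete flags of relative position $M$ and $N$ strictly compatible with both. The growth diagram of $(F,F',N)$ is the $5\times5$ array of partitions $G_{i,j}=\mathrm{JF}(N|_{F_i\cap F'_j})$, $0\le i,j\le4$, where for nilpotent $N$, $\mathrm{JF}(N)$ is the partition with $\lambda_1+\cdots+\lambda_i=\dim\ker N^i$. *)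

theory Defs
  imports "HOL-Analysis.Analysis" "HOL-Computational_Algebra.Primes"
begin

text \<open>Vectors of k^4 are elements of type 'k^4, matrices N in gl_4 are of type 'k^4^4,
  acting by N *v x.  Subspace dimension is the dimension over the field 'k (vec.dim).\<close>

text \<open>Complete flag 0 = F_0 < F_1 < ... < F_4 = k^4, given as F :: nat => subspace
  (only indices 0..4 matter).\<close>
definition complete_flag :: "(nat \<Rightarrow> ('k::field^4) set) \<Rightarrow> bool" where
  "complete_flag F \<longleftrightarrow>
     (\<forall>i\<le>4. vec.subspace (F i) \<and> vec.dim (F i) = i) \<and>
     (\<forall>i<4. F i \<subseteq> F (Suc i)) \<and> F 0 = {0} \<and> F 4 = UNIV"

text \<open>Permutation matrix of w in S_4: entry (a,b) is delta_{a, w(b)}; indices 1..4.\<close>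
definition perm_mat :: "(nat \<Rightarrow> nat) \<Rightarrow> nat \<Rightarrow> nat \<Rightarrow> nat" where
  "perm_mat w a b = (if a = w b then 1 else 0)"

text \<open>The permutation given in one-line notation [w(1), w(2), w(3), w(4)].\<close>
definition one_line :: "nat list \<Rightarrow> nat \<Rightarrow> nat" where
  "one_line ws b = ws ! (b - 1)"

text \<open>(F,F') has relative position M: dim(F_i \<inter> F'_j) = sum_{i'<=i, j'<=j} M_{i',j'}.\<close>
definition rel_pos :: "(nat \<Rightarrow> nat \<Rightarrow> nat) \<Rightarrow> (nat \<Rightarrow> ('k::field^4) set) \<Rightarrow>
    (nat \<Rightarrow> ('k^4) set) \<Rightarrow> bool" where
  "rel_pos M F F' \<longleftrightarrow>
     (\<forall>i\<le>4. \<forall>j\<le>4. vec.dim (F i \<inter> F' j) = (\<Sum>i'\<in>{1..i}. \<Sum>j'\<in>{1..j}. M i' j'))"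

text \<open>N strictly compatible with F: N(F_i) \<subseteq> F_{i-1} for i = 1..4.\<close>
definition strictly_compatible :: "('k::field^4^4) \<Rightarrow> (nat \<Rightarrow> ('k^4) set) \<Rightarrow> bool" where
  "strictly_compatible N F \<longleftrightarrow> (\<forall>i\<in>{1..4}. (\<lambda>x. N *v x) ` F i \<subseteq> F (i - 1))"

text \<open>Omega_M: triples (F, F', N).\<close>
definition Omega :: "(nat \<Rightarrow> nat \<Rightarrow> nat) \<Rightarrow>
    ((nat \<Rightarrow> ('k::field^4) set) \<times> (nat \<Rightarrow> ('k^4) set) \<times> ('k^4^4)) set" where
  "Omega M = {(F, F', N). complete_flag F \<and> complete_flag F' \<and> rel_pos M F F' \<and>
                strictly_compatible N F \<and> strictly_compatible N F'}"

text \<open>dim ker (N|_V)^i for an N-stable subspace V.\<close>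
definition ker_dim :: "('k::field^4^4) \<Rightarrow> ('k^4) set \<Rightarrow> nat \<Rightarrow> nat" where
  "ker_dim N V i = vec.dim {v \<in> V. ((\<lambda>x. N *v x) ^^ i) v = 0}"

text \<open>Jordan form JF(N|_V) of a nilpotent restriction: the partition lambda with
  lambda_1 + ... + lambda_i = dim ker (N|_V)^i, i.e. lambda_i = dim ker^i - dim ker^(i-1),
  listed as the list of its nonzero parts (lambda_1, lambda_2, ...).\<close>
definition JF :: "('k::field^4^4) \<Rightarrow> ('k^4) set \<Rightarrow> nat list" where
  "JF N V = filter (\<lambda>l. l > 0)
      (map (\<lambda>i. ker_dim N V i - ker_dim N V (i - 1)) [1..<vec.dim V + 1])"

text \<open>Growth diagram entry G_{i,j} = JF(N|_{F_i \<inter> F'_j}).\<close>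
definition growth :: "(nat \<Rightarrow> ('k::field^4) set) \<Rightarrow> (nat \<Rightarrow> ('k^4) set) \<Rightarrow> ('k^4^4) \<Rightarrow>
    nat \<Rightarrow> nat \<Rightarrow> nat list" where
  "growth F F' N i j = JF N (F i \<inter> F' j)"

end

theory Submission
  imports Defs
begin


lemma JF2: "vec.dim V = 2 \<Longrightarrow> JF N V = filter (\<lambda>l. 0<l) [ker_dim N V 1 - ker_dim N V 0, ker_dim N V 2 - ker_dim N V 1]"
  by (simp add: JF_def upt_rec numeral_eq_Suc)
lemma JF3: "vec.dim V = 3 \<Longrightarrow> JF N V = filter (\<lambda>l. 0<l) [ker_dim N V 1 - ker_dim N V 0, ker_dim N V 2 - ker_dim N V 1, ker_dim N V 3 - ker_dim N V 2]"
  by (simp add: JF_def upt_rec numeral_eq_Suc)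
lemma JF4: "vec.dim V = 4 \<Longrightarrow> JF N V = filter (\<lambda>l. 0<l) [ker_dim N V 1 - ker_dim N V 0, ker_dim N V 2 - ker_dim N V 1, ker_dim N V 3 - ker_dim N V 2, ker_dim N V 4 - ker_dim N V 3]"
  by (simp add: JF_def upt_rec numeral_eq_Suc)

lemma pow_add: "((\<lambda>x. (N::'a::field^'n^'n) *v x) ^^ i) (x + y) = ((\<lambda>x. N *v x) ^^ i) x + ((\<lambda>x. N *v x) ^^ i) y"
  by (induct i) (simp_all add: matrix_vector_right_distrib)
lemma pow_scale: "((\<lambda>x. (N::'a::field^'n^'n) *v x) ^^ i) (c *s x) = c *s ((\<lambda>x. N *v x) ^^ i) x"
  by (induct i) (simp_all add: vec.scale)
lemma pow_zero: "((\<lambda>x. (N::'a::field^'n^'n) *v x) ^^ i) 0 = 0"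
  by (induct i) simp_all

lemma ker_subspace:
  assumes "vec.subspace V"
  shows "vec.subspace {v\<in>V. ((\<lambda>x. (N::'a::field^'n^'n) *v x) ^^ i) v = 0}"
  using assms unfolding vec.subspace_def by (auto simp: pow_add pow_scale pow_zero)

lemma dim_zero_set: "vec.dim {0::'a::field^'n} = 0"
  by (metis vec.dim_empty vec.dim_span vec.span_empty)

lemma dim_eq0:
  assumes "vec.subspace (V::('a::field^'n) set)" "vec.dim V = 0"
  shows "V = {0}"
proof -
  have "vec.subspace {0::'a^'n}" by (metis vec.span_empty vec.subspace_span)
  moreover have "{0} \<subseteq> V" using assms(1) vec.subspace_0 by auto
  ultimately show ?thesis using vec.subspace_dim_equal[of "{0}" V] assms dim_zero_set by auto
qed

lemma kd0: "vec.subspace V \<Longrightarrow> ker_dim N V 0 = 0"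
proof -
  assume "vec.subspace V"
  then have "{v \<in> V. ((\<lambda>x. N *v x) ^^ 0) v = 0} = {0}" using vec.subspace_0 by auto
  then show ?thesis unfolding ker_dim_def using dim_zero_set by simp
qed

lemma kd_mono: "ker_dim N V i \<le> ker_dim N V (Suc i)"
  unfolding ker_dim_def by (rule vec.dim_subset) (auto simp: pow_zero)

lemma kd_le: "ker_dim N V i \<le> vec.dim V"
  unfolding ker_dim_def by (rule vec.dim_subset) auto

lemma kd_stab:
  assumes V: "vec.subspace V" "\<forall>x\<in>V. N *v x \<in> V"
    and eq: "ker_dim N V i = ker_dim N V (Suc i)"
  shows "ker_dim N V (Suc i) = ker_dim N V (Suc (Suc i))"
proof -
  let ?K = "\<lambda>j. {v\<in>V. ((\<lambda>x. N *v x) ^^ j) v = 0}"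
  have sub: "?K i \<subseteq> ?K (Suc i)" by (auto simp: pow_zero)
  have "?K i = ?K (Suc i)"
    using vec.subspace_dim_equal[OF ker_subspace[OF V(1)] ker_subspace[OF V(1)] sub] eq
    unfolding ker_dim_def by simp
  moreover have "?K (Suc (Suc i)) \<subseteq> ?K (Suc i)"
  proof
    fix v assume v: "v \<in> ?K (Suc (Suc i))"
    then have "N *v v \<in> ?K (Suc i)" using V(2)
      by (simp add: funpow_Suc_right del: funpow.simps)
    then have "N *v v \<in> ?K i" using calculation by simp
    then show "v \<in> ?K (Suc i)" using v by (simp add: funpow_Suc_right del: funpow.simps)
  qed
  moreover have "?K (Suc i) \<subseteq> ?K (Suc (Suc i))" by (auto simp: pow_zero)
  ultimately have "?K (Suc i) = ?K (Suc (Suc i))" by blast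
  then show ?thesis unfolding ker_dim_def by simp
qed

lemma inv2:
  assumes V: "vec.subspace V" "\<forall>x\<in>V. N *v x \<in> V" and d: "vec.dim V = 2"
    and J: "JF N V = [2]"
  shows "\<forall>v\<in>V. N *v v = 0"
proof -
  have k0: "ker_dim N V 0 = 0" by (rule kd0[OF V(1)])
  have m1: "ker_dim N V 1 \<le> ker_dim N V 2" using kd_mono[of N V 1] by (simp add: numeral_2_eq_2)
  have s0: "ker_dim N V 1 = 0 \<Longrightarrow> ker_dim N V 2 = 0"
    using kd_stab[OF V, of 0] k0 by (simp add: numeral_2_eq_2)
  have b: "ker_dim N V 2 \<le> 2" using kd_le[of N V 2] d by simp
  from J[unfolded JF2[OF d]] k0 m1 s0 b have "ker_dim N V 1 = 2"
    by (auto split: if_splits)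
  then have "{v\<in>V. ((\<lambda>x. N *v x) ^^ 1) v = 0} = V"
    using vec.subspace_dim_equal[OF ker_subspace[OF V(1), where N=N and i=1] V(1)] d
    unfolding ker_dim_def by auto
  then show ?thesis by auto
qed

lemma inv21:
  assumes V: "vec.subspace V" "\<forall>x\<in>V. N *v x \<in> V" and d: "vec.dim V = 3"
    and J: "JF N V = [2,1]"
  shows "vec.dim {v\<in>V. N *v v = 0} = 2" "\<forall>v\<in>V. N *v (N *v v) = 0"
proof -
  have k0: "ker_dim N V 0 = 0" by (rule kd0[OF V(1)])
  have m1: "ker_dim N V 1 \<le> ker_dim N V 2" using kd_mono[of N V 1] by (simp add: numeral_2_eq_2)
  have m2: "ker_dim N V 2 \<le> ker_dim N V 3" using kd_mono[of N V 2] by (simp add: numeral_3_eq_3 numeral_2_eq_2)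
  have s0: "ker_dim N V 1 = 0 \<Longrightarrow> ker_dim N V 2 = 0"
    using kd_stab[OF V, of 0] k0 by (simp add: numeral_2_eq_2)
  have s1: "ker_dim N V 1 = ker_dim N V 2 \<Longrightarrow> ker_dim N V 2 = ker_dim N V 3"
    using kd_stab[OF V, of 1] by (simp add: numeral_2_eq_2 numeral_3_eq_3)
  have b: "ker_dim N V 3 \<le> 3" using kd_le[of N V 3] d by simp
  from J[unfolded JF3[OF d]] k0 m1 m2 s0 s1 b have r: "ker_dim N V 1 = 2" "ker_dim N V 2 = 3"
    by (auto split: if_splits)
  then show "vec.dim {v\<in>V. N *v v = 0} = 2" unfolding ker_dim_def by simp
  have "{v\<in>V. ((\<lambda>x. N *v x) ^^ 2) v = 0} = V"
    using vec.subspace_dim_equal[OF ker_subspace[OF V(1), where N=N and i=2] V(1)] d r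
    unfolding ker_dim_def by auto
  then show "\<forall>v\<in>V. N *v (N *v v) = 0" by (auto simp: numeral_2_eq_2)
qed



lemma rank_nullity:
  fixes N :: "'a::field^'n^'n"
  assumes V: "vec.subspace V"
  shows "vec.dim ((\<lambda>x. N *v x) ` V) + vec.dim {v\<in>V. N *v v = 0} = vec.dim V"
proof -
  let ?f = "\<lambda>x. N *v x"
  define K where "K = {v\<in>V. N *v v = 0}"
  have Ksub: "vec.subspace K" unfolding K_def
    using ker_subspace[OF V, where N=N and i=1] by simp
  have KV: "K \<subseteq> V" unfolding K_def by auto
  obtain B where B: "B \<subseteq> K" "vec.independent B" "K \<subseteq> vec.span B" "card B = vec.dim K"
    using vec.basis_exists by blast
  obtain C where C: "B \<subseteq> C" "C \<subseteq> V" "vec.independent C" "V \<subseteq> vec.span C"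
    using vec.maximal_independent_subset_extend[of B V] B KV by blast
  have fC: "finite C" using C(3) vec.finiteI_independent by blast
  have cC: "card C = vec.dim V" using vec.basis_card_eq_dim[OF C(2) C(4) C(3)] .
  define U where "U = vec.span (C - B)"
  have iU: "vec.independent (C - B)" using C(3) vec.independent_mono by blast
  have dU: "vec.dim U = card C - card B" unfolding U_def
    using vec.dim_span_eq_card_independent[OF iU] card_Diff_subset[OF finite_subset[OF C(1) fC] C(1)] by simp
  have Usub: "vec.subspace U" unfolding U_def by (rule vec.subspace_span)
  have UV: "U \<subseteq> V" unfolding U_def using C(2) V vec.span_minimal[of "C - B" V] by blast
  define S where "S = {x + y |x y. x \<in> U \<and> y \<in> K}"
  have Ssub: "vec.subspace S" unfolding S_def by (rule vec.subspace_sums[OF Usub Ksub])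
  have SV: "S \<subseteq> V" unfolding S_def using UV KV V vec.subspace_add by blast
  have CS: "C \<subseteq> S"
  proof
    fix c assume c: "c \<in> C"
    show "c \<in> S"
    proof (cases "c \<in> B")
      case True
      then have "c \<in> K" using B(1) by blast
      moreover have "0 \<in> U" using Usub vec.subspace_0 by blast
      ultimately show ?thesis unfolding S_def by force
    next
      case False
      then have "c \<in> U" unfolding U_def using c vec.span_base by blast
      moreover have "0 \<in> K" using Ksub vec.subspace_0 by blast
      ultimately show ?thesis unfolding S_def by force
    qed
  qed
  have VS: "V = S"
  proof
    show "V \<subseteq> S" using C(4) vec.span_minimal[OF CS Ssub] by blast
  qed (rule SV)
  have "vec.dim S + vec.dim (U \<inter> K) = vec.dim U + vec.dim K"
    unfolding S_def by (rule vec.dim_sums_Int[OF Usub Ksub])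
  moreover have "card B \<le> card C" using card_mono[OF fC C(1)] .
  ultimately have "vec.dim (U \<inter> K) = 0" using VS cC dU B(4) by simp
  then have UK: "U \<inter> K = {0}" using dim_eq0 vec.subspace_inter[OF Usub Ksub] by blast
  have inj: "inj_on ?f (vec.span U)"
    unfolding vec.span_eq_iff[THEN iffD2, OF Usub]
  proof (rule inj_onI)
    fix x y assume xy: "x \<in> U" "y \<in> U" "N *v x = N *v y"
    have "x - y \<in> U" using xy Usub vec.subspace_diff by blast
    moreover have "N *v (x - y) = 0" using xy(3) by (simp add: matrix_vector_mult_diff_distrib)
    ultimately have "x - y \<in> U \<inter> K" unfolding K_def using UV by blast
    then show "x = y" using UK by auto
  qed
  have im: "?f ` V = ?f ` U"
  proof
    show "?f ` U \<subseteq> ?f ` V" using UV by blast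
    show "?f ` V \<subseteq> ?f ` U"
    proof
      fix z assume "z \<in> ?f ` V"
      then obtain v where v: "v \<in> V" "z = N *v v" by blast
      then obtain u k where uk: "v = u + k" "u \<in> U" "k \<in> K" using VS unfolding S_def by blast
      have "N *v k = 0" using uk(3) unfolding K_def by blast
      then have "z = N *v u" using v uk by (simp add: matrix_vector_right_distrib)
      then show "z \<in> ?f ` U" using uk by blast
    qed
  qed
  have "vec.dim (?f ` U) = vec.dim U"
    by (rule vec.dim_image_eq[OF _ inj]) simp
  then show ?thesis using im dU cC B(4) \<open>card B \<le> card C\<close> unfolding K_def[symmetric] by simp
qed

lemma JF_sq:
  fixes N :: "'a::field^4^4"
  assumes sq: "\<forall>v. N *v (N *v v) = 0" and d: "vec.dim {v. N *v v = 0} = d"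
  shows "JF N UNIV = filter (\<lambda>l. 0 < l) [d, 4 - d, 0, 0]"
proof -
  have dU: "vec.dim (UNIV :: ('a^4) set) = 4" using vec_dim_card[where 'a='a and 'n=4] by (simp del: vec.dim_UNIV)
  have full: "ker_dim N UNIV (Suc (Suc i)) = 4" for i
  proof -
    have "{v \<in> UNIV. ((\<lambda>x. N *v x) ^^ Suc (Suc i)) v = 0} = UNIV"
      using sq by (simp add: funpow_Suc_right pow_zero del: funpow.simps)
    then show ?thesis unfolding ker_dim_def using dU by simp
  qed
  have k1: "ker_dim N UNIV 1 = d" unfolding ker_dim_def using d by simp
  have k0: "ker_dim N UNIV 0 = 0" by (rule kd0) simp
  show ?thesis unfolding JF4[OF dU] using full[of 0] full[of 1] full[of 2] k1 k0
    by (simp add: numeral_eq_Suc)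
qed



lemma cf_sub: "complete_flag F \<Longrightarrow> i \<le> 4 \<Longrightarrow> vec.subspace (F i)"
  unfolding complete_flag_def by simp
lemma cf_dim: "complete_flag F \<Longrightarrow> i \<le> 4 \<Longrightarrow> vec.dim (F i) = i"
  unfolding complete_flag_def by simp
lemma cf_step: "complete_flag F \<Longrightarrow> i < 4 \<Longrightarrow> F i \<subseteq> F (Suc i)"
  unfolding complete_flag_def by simp
lemma cf_0: "complete_flag F \<Longrightarrow> F 0 = {0}"
  unfolding complete_flag_def by simp
lemma cf_4: "complete_flag F \<Longrightarrow> F 4 = UNIV"
  unfolding complete_flag_def by simp
lemma sc_map: "strictly_compatible N F \<Longrightarrow> 1 \<le> i \<Longrightarrow> i \<le> 4 \<Longrightarrow> x \<in> F i \<Longrightarrow> N *v x \<in> F (i - 1)"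
  unfolding strictly_compatible_def by (metis atLeastAtMost_iff image_subset_iff)
lemma rp_dim: "rel_pos M F F' \<Longrightarrow> i \<le> 4 \<Longrightarrow> j \<le> 4 \<Longrightarrow>
   vec.dim (F i \<inter> F' j) = (\<Sum>i'\<in>{1..i}. \<Sum>j'\<in>{1..j}. M i' j')"
  unfolding rel_pos_def by simp

lemma dimUNIV4: "vec.dim (UNIV :: ('a::field^4) set) = 4"
  using vec_dim_card[where 'a='a and 'n=4] by (simp del: vec.dim_UNIV)

lemma sum_UNIV:
  assumes A: "vec.subspace (A::('a::field^4) set)" and B: "vec.subspace B"
    and dA: "vec.dim A = 3" and dB: "vec.dim B = 3" and dAB: "vec.dim (A \<inter> B) = 2"
  shows "\<forall>v. \<exists>a b. v = a + b \<and> a \<in> A \<and> b \<in> B"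
proof -
  let ?S = "{x + y |x y. x \<in> A \<and> y \<in> B}"
  have dS: "vec.dim ?S = 4" using vec.dim_sums_Int[OF A B] dA dB dAB by simp
  have "?S = UNIV"
    by (rule vec.subspace_dim_equal[OF vec.subspace_sums[OF A B] vec.subspace_UNIV subset_UNIV])
      (simp only: dS dimUNIV4)
  then show ?thesis by blast
qed

lemma univ3412:
  fixes N :: "'a::field^4^4"
  assumes om: "(F, F', N) \<in> Omega (perm_mat (one_line [3,4,1,2]))"
    and g34: "growth F F' N 3 4 = [2,1]" and g43: "growth F F' N 4 3 = [2,1]"
  shows "growth F F' N 4 4 = [2,2]"
proof -
  let ?M = "perm_mat (one_line [3,4,1,2])"
  from om have cF: "complete_flag F" and cF': "complete_flag F'" and rp: "rel_pos ?M F F'"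
    and sF: "strictly_compatible N F" and sF': "strictly_compatible N F'"
    by (simp_all add: Omega_def)
  have d22: "vec.dim (F 2 \<inter> F' 2) = 0" using rp_dim[OF rp, of 2 2]
    by (simp add: perm_mat_def one_line_def eval_nat_numeral sum.atLeast_Suc_atMost)
  have d33: "vec.dim (F 3 \<inter> F' 3) = 2" using rp_dim[OF rp, of 3 3]
    by (simp add: perm_mat_def one_line_def eval_nat_numeral sum.atLeast_Suc_atMost)
  have s2: "vec.subspace (F 2)" "vec.subspace (F' 2)" "vec.subspace (F 3)" "vec.subspace (F' 3)"
    using cf_sub[OF cF] cf_sub[OF cF'] by auto
  have dd: "vec.dim (F 3) = 3" "vec.dim (F' 3) = 3" using cf_dim[OF cF] cf_dim[OF cF'] by auto
  have inc: "F 2 \<subseteq> F 3" "F' 2 \<subseteq> F' 3" using cf_step[OF cF, of 2] cf_step[OF cF', of 2] by auto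
  have Z: "F 2 \<inter> F' 2 = {0}" using dim_eq0[OF vec.subspace_inter[OF s2(1) s2(2)] d22] .
  have im3: "\<forall>x\<in>F 3. N *v x \<in> F 2" using sc_map[OF sF, of 3] by auto
  have im3': "\<forall>x\<in>F' 3. N *v x \<in> F' 2" using sc_map[OF sF', of 3] by auto
  have TW: "\<forall>w\<in>F 3 \<inter> F' 3. N *v w = 0"
  proof
    fix w assume "w \<in> F 3 \<inter> F' 3"
    then have "N *v w \<in> F 2 \<inter> F' 2" using im3 im3' by simp
    with Z show "N *v w = 0" by simp
  qed
  have J3: "JF N (F 3) = [2,1]" using g34 cf_4[OF cF'] by (simp add: growth_def)
  have J3': "JF N (F' 3) = [2,1]" using g43 cf_4[OF cF] by (simp add: growth_def)
  have st3: "\<forall>x\<in>F 3. N *v x \<in> F 3" using im3 inc by blast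
  have st3': "\<forall>x\<in>F' 3. N *v x \<in> F' 3" using im3' inc by blast
  note A = inv21[OF s2(3) st3 dd(1) J3]
  note B = inv21[OF s2(4) st3' dd(2) J3']
  have r3: "vec.dim ((\<lambda>x. N *v x) ` F 3) = 1" using rank_nullity[OF s2(3), of N] A(1) dd by simp
  have r3': "vec.dim ((\<lambda>x. N *v x) ` F' 3) = 1" using rank_nullity[OF s2(4), of N] B(1) dd by simp
  let ?I = "(\<lambda>x. N *v x) ` F 3" and ?I' = "(\<lambda>x. N *v x) ` F' 3"
  have sI: "vec.subspace ?I" "vec.subspace ?I'" using vec.subspace_image s2 by auto
  have "?I \<inter> ?I' \<subseteq> {0}"
  proof
    fix z assume "z \<in> ?I \<inter> ?I'"
    then have "z \<in> F 2 \<inter> F' 2" using im3 im3' by auto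
    with Z show "z \<in> {0}" by simp
  qed
  then have dI: "vec.dim (?I \<inter> ?I') = 0" using vec.dim_subset[of "?I \<inter> ?I'" "{0}"] dim_zero_set by simp
  then have dsum: "vec.dim {x + y |x y. x \<in> ?I \<and> y \<in> ?I'} = 2"
    using vec.dim_sums_Int[OF sI] r3 r3' dI by simp
  have sI2: "{x + y |x y. x \<in> ?I \<and> y \<in> ?I'} \<subseteq> (\<lambda>x. N *v x) ` UNIV"
  proof
    fix z assume "z \<in> {x + y |x y. x \<in> ?I \<and> y \<in> ?I'}"
    then obtain p q where "z = N *v p + N *v q" by blast
    then have "z = N *v (p + q)" by (simp add: matrix_vector_right_distrib)
    then show "z \<in> (\<lambda>x. N *v x) ` UNIV" by blast
  qed
  have "2 \<le> vec.dim ((\<lambda>x. N *v x) ` UNIV)" using vec.dim_subset[OF sI2] dsum by simp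
  then have k_le: "vec.dim {v. N *v v = 0} \<le> 2"
    using rank_nullity[OF vec.subspace_UNIV, of N] dimUNIV4[where 'a='a] by (simp del: vec.dim_UNIV)
  have WK: "F 3 \<inter> F' 3 \<subseteq> {v. N *v v = 0}" using TW by blast
  have "2 \<le> vec.dim {v. N *v v = 0}" using vec.dim_subset[OF WK] d33 by simp
  with k_le have kd: "vec.dim {v. N *v v = 0} = 2" by simp
  have dec: "\<forall>v. \<exists>a b. v = a + b \<and> a \<in> F 3 \<and> b \<in> F' 3"
    by (rule sum_UNIV[OF s2(3) s2(4) dd d33])
  have sq: "\<forall>v. N *v (N *v v) = 0"
  proof
    fix v
    obtain a b where "v = a + b" "a \<in> F 3" "b \<in> F' 3" using dec by blast
    then show "N *v (N *v v) = 0" using A(2) B(2) by (simp add: matrix_vector_right_distrib)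
  qed
  have "JF N UNIV = [2,2]" using JF_sq[OF sq kd] by simp
  then show ?thesis unfolding growth_def cf_4[OF cF] cf_4[OF cF'] by simp
qed



lemma ker1_subspace: "vec.subspace V \<Longrightarrow> vec.subspace {v\<in>V. (N::'a::field^'n^'n) *v v = 0}"
  using ker_subspace[where N=N and i=1] by simp

lemma univ1432:
  fixes N :: "'a::field^4^4"
  assumes om: "(F, F', N) \<in> Omega (perm_mat (one_line [1,4,3,2]))"
    and g33: "growth F F' N 3 3 = [2]"
    and g34: "growth F F' N 3 4 = [2,1]" and g43: "growth F F' N 4 3 = [2,1]"
  shows "growth F F' N 4 4 = [3,1]"
proof -
  let ?M = "perm_mat (one_line [1,4,3,2])"
  from om have cF: "complete_flag F" and cF': "complete_flag F'" and rp: "rel_pos ?M F F'"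
    and sF: "strictly_compatible N F" and sF': "strictly_compatible N F'"
    by (simp_all add: Omega_def)
  have d11: "vec.dim (F 1 \<inter> F' 1) = 1" using rp_dim[OF rp, of 1 1]
    by (simp add: perm_mat_def one_line_def eval_nat_numeral sum.atLeast_Suc_atMost)
  have d13: "vec.dim (F 1 \<inter> F' 3) = 1" using rp_dim[OF rp, of 1 3]
    by (simp add: perm_mat_def one_line_def eval_nat_numeral sum.atLeast_Suc_atMost)
  have d23: "vec.dim (F 2 \<inter> F' 3) = 1" using rp_dim[OF rp, of 2 3]
    by (simp add: perm_mat_def one_line_def eval_nat_numeral sum.atLeast_Suc_atMost)
  have d32: "vec.dim (F 3 \<inter> F' 2) = 1" using rp_dim[OF rp, of 3 2]
    by (simp add: perm_mat_def one_line_def eval_nat_numeral sum.atLeast_Suc_atMost)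
  have d33: "vec.dim (F 3 \<inter> F' 3) = 2" using rp_dim[OF rp, of 3 3]
    by (simp add: perm_mat_def one_line_def eval_nat_numeral sum.atLeast_Suc_atMost)
  have s: "vec.subspace (F 1)" "vec.subspace (F' 1)" "vec.subspace (F 2)" "vec.subspace (F' 2)"
     "vec.subspace (F 3)" "vec.subspace (F' 3)"
    using cf_sub[OF cF] cf_sub[OF cF'] by auto
  have dd: "vec.dim (F 1) = 1" "vec.dim (F' 1) = 1" "vec.dim (F 3) = 3" "vec.dim (F' 3) = 3"
    using cf_dim[OF cF] cf_dim[OF cF'] by auto
  have inc: "F 1 \<subseteq> F 2" "F 2 \<subseteq> F 3" "F' 1 \<subseteq> F' 2" "F' 2 \<subseteq> F' 3"
    using cf_step[OF cF, of 1] cf_step[OF cF, of 2] cf_step[OF cF', of 1] cf_step[OF cF', of 2]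
    by (simp_all add: numeral_2_eq_2 numeral_3_eq_3)
  have e13: "F 1 \<inter> F' 3 = F 1"
    by (rule vec.subspace_dim_equal[OF vec.subspace_inter[OF s(1) s(6)] s(1)]) (simp_all only: d13 dd Int_lower1 Int_lower2 le_refl)
  have e11: "F 1 \<inter> F' 1 = F 1"
    by (rule vec.subspace_dim_equal[OF vec.subspace_inter[OF s(1) s(2)] s(1)]) (simp_all only: d11 dd Int_lower1 Int_lower2 le_refl)
  have e11': "F 1 \<inter> F' 1 = F' 1"
    by (rule vec.subspace_dim_equal[OF vec.subspace_inter[OF s(1) s(2)] s(2)]) (simp_all only: d11 dd Int_lower1 Int_lower2 le_refl)
  have F1: "F' 1 = F 1" using e11 e11' by simp
  have e23: "F 1 = F 2 \<inter> F' 3"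
    apply (rule vec.subspace_dim_equal[OF s(1) vec.subspace_inter[OF s(3) s(6)]])
    using inc e13 apply blast
    using d23 dd by simp
  have e32: "F 1 = F 3 \<inter> F' 2"
    apply (rule vec.subspace_dim_equal[OF s(1) vec.subspace_inter[OF s(5) s(4)]])
    using inc F1 apply blast
    using d32 dd by simp
  have im3: "\<forall>x\<in>F 3. N *v x \<in> F 2" using sc_map[OF sF, of 3] by auto
  have im3': "\<forall>x\<in>F' 3. N *v x \<in> F' 2" using sc_map[OF sF', of 3] by auto
  have sW: "vec.subspace (F 3 \<inter> F' 3)" using vec.subspace_inter[OF s(5) s(6)] .
  have stW: "\<forall>x\<in>F 3 \<inter> F' 3. N *v x \<in> F 3 \<inter> F' 3" using im3 im3' inc by blast
  have JW: "JF N (F 3 \<inter> F' 3) = [2]" using g33 by (simp add: growth_def)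
  note TW = inv2[OF sW stW d33 JW]
  have J3: "JF N (F 3) = [2,1]" using g34 cf_4[OF cF'] by (simp add: growth_def)
  have J3': "JF N (F' 3) = [2,1]" using g43 cf_4[OF cF] by (simp add: growth_def)
  have st3: "\<forall>x\<in>F 3. N *v x \<in> F 3" using im3 inc by blast
  have st3': "\<forall>x\<in>F' 3. N *v x \<in> F' 3" using im3' inc by blast
  note A = inv21[OF s(5) st3 dd(3) J3]
  note B = inv21[OF s(6) st3' dd(4) J3']
  have K3: "F 3 \<inter> F' 3 = {v\<in>F 3. N *v v = 0}"
    apply (rule vec.subspace_dim_equal[OF sW ker1_subspace[OF s(5)]])
    using TW apply blast
    using A(1) d33 by simp
  have K3': "F 3 \<inter> F' 3 = {v\<in>F' 3. N *v v = 0}"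
    apply (rule vec.subspace_dim_equal[OF sW ker1_subspace[OF s(6)]])
    using TW apply blast
    using B(1) d33 by simp
  have T3: "\<forall>x\<in>F 3. N *v x \<in> F 1"
  proof
    fix x assume x: "x \<in> F 3"
    have "N *v x \<in> {v\<in>F 3. N *v v = 0}" using x im3 inc A(2) by blast
    then have "N *v x \<in> F 2 \<inter> F' 3" using K3 im3 x by blast
    then show "N *v x \<in> F 1" using e23 by simp
  qed
  have T3': "\<forall>x\<in>F' 3. N *v x \<in> F 1"
  proof
    fix x assume x: "x \<in> F' 3"
    have "N *v x \<in> {v\<in>F' 3. N *v v = 0}" using x im3' inc B(2) by blast
    then have "N *v x \<in> F 3 \<inter> F' 2" using K3' im3' x by blast
    then show "N *v x \<in> F 1" using e32 by simp
  qed
  have dec: "\<forall>v. \<exists>a b. v = a + b \<and> a \<in> F 3 \<and> b \<in> F' 3"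
    by (rule sum_UNIV[OF s(5) s(6) dd(3) dd(4) d33])
  have rg: "(\<lambda>x. N *v x) ` UNIV \<subseteq> F 1"
  proof
    fix z assume "z \<in> (\<lambda>x. N *v x) ` UNIV"
    then obtain v where v: "z = N *v v" by blast
    obtain a b where ab: "v = a + b" "a \<in> F 3" "b \<in> F' 3" using dec by blast
    have "N *v a + N *v b \<in> F 1" using T3 T3' ab vec.subspace_add[OF s(1)] by blast
    then show "z \<in> F 1" using v ab by (simp add: matrix_vector_right_distrib)
  qed
  have "vec.dim ((\<lambda>x. N *v x) ` UNIV) \<le> 1" using vec.dim_subset[OF rg] dd by simp
  then have k_ge: "3 \<le> vec.dim {v. N *v v = 0}"
    using rank_nullity[OF vec.subspace_UNIV, of N] dimUNIV4[where 'a='a] by (simp del: vec.dim_UNIV)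
  have k_le: "vec.dim {v. N *v v = 0} \<le> 3"
  proof (rule ccontr)
    assume "\<not> vec.dim {v. N *v v = 0} \<le> 3"
    then have "vec.dim (UNIV::('a^4) set) \<le> vec.dim {v. N *v v = 0}"
      using dimUNIV4[where 'a='a] by (simp del: vec.dim_UNIV)
    then have "{v. N *v v = 0} = UNIV"
      using vec.subspace_dim_equal[OF ker1_subspace[OF vec.subspace_UNIV, of N] vec.subspace_UNIV] by simp
    then have "{v\<in>F 3. N *v v = 0} = F 3" by auto
    then show False using A(1) dd by simp
  qed
  have kd: "vec.dim {v. N *v v = 0} = 3" using k_ge k_le by simp
  have sq: "\<forall>v. N *v (N *v v) = 0"
  proof
    fix v
    obtain a b where "v = a + b" "a \<in> F 3" "b \<in> F' 3" using dec by blast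
    then show "N *v (N *v v) = 0" using A(2) B(2) by (simp add: matrix_vector_right_distrib)
  qed
  have "JF N UNIV = [3,1]" using JF_sq[OF sq kd] by simp
  then show ?thesis unfolding growth_def cf_4[OF cF] cf_4[OF cF'] by simp
qed



definition coord :: "4 set \<Rightarrow> ('a::field^4) set" where
  "coord S = {x. \<forall>i. i \<notin> S \<longrightarrow> x$i = 0}"

lemma coord_Int: "coord A \<inter> coord B = coord (A \<inter> B)" by (auto simp: coord_def)
lemma coord_dim: "vec.dim (coord S :: ('a::field^4) set) = card S"
  unfolding coord_def by (rule dim_substandard_cart)
lemma coord_sub: "vec.subspace (coord S)"
  unfolding coord_def vec.subspace_def by auto
lemma coord_UNIV: "coord UNIV = UNIV" by (auto simp: coord_def)
lemma coord_empty: "coord {} = {0}" by (auto simp: coord_def vec_eq_iff)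
lemma coord_mono: "A \<subseteq> B \<Longrightarrow> coord A \<subseteq> coord B" by (auto simp: coord_def)
lemma card_UNIV4: "card (UNIV::4 set) = 4" by (simp only: card_bit0 card_num1)

lemma all_le4: "(\<forall>i\<le>(4::nat). P i) \<longleftrightarrow> P 0 \<and> P 1 \<and> P 2 \<and> P 3 \<and> P 4"
  by (auto simp: le_Suc_eq numeral_eq_Suc)
lemma all_lt4: "(\<forall>i<(4::nat). P i) \<longleftrightarrow> P 0 \<and> P 1 \<and> P 2 \<and> P 3"
  by (auto simp: less_Suc_eq numeral_eq_Suc)
lemma all_14: "(\<forall>i\<in>{1..(4::nat)}. P i) \<longleftrightarrow> P 1 \<and> P 2 \<and> P 3 \<and> P 4"
  by (auto simp: le_Suc_eq numeral_eq_Suc)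

definition N1 :: "'a::field^4^4" where
  "N1 = (\<chi> i j. if (i = 1 \<and> j = 2) \<or> (i = 3 \<and> j = 4) then 1 else 0)"

lemma d4: "(1::4) \<noteq> 2" "(1::4) \<noteq> 3" "(1::4) \<noteq> 4" "(2::4) \<noteq> 3" "(2::4) \<noteq> 4" "(3::4) \<noteq> 4"
  "(2::4) \<noteq> 1" "(3::4) \<noteq> 1" "(4::4) \<noteq> 1" "(3::4) \<noteq> 2" "(4::4) \<noteq> 2" "(4::4) \<noteq> 3"
  by simp_all

lemma N1_app: "N1 *v x = (\<chi> i. if i = 1 then x$2 else if i = 3 then x$4 else 0)"
  unfolding N1_def matrix_vector_mult_def vec_eq_iff
proof
  fix i :: 4
  show "(\<chi> i. \<Sum>j\<in>UNIV. (\<chi> i j. if i = 1 \<and> j = 2 \<or> i = 3 \<and> j = 4 then 1 else 0) $ i $ j * x $ j) $ i =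
        (\<chi> i. if i = 1 then x $ 2 else if i = 3 then x $ 4 else 0) $ i"
    unfolding UNIV_4 using exhaust_4[of i] d4 by (auto simp: d4)
qed

definition N2 :: "'a::field^4^4" where
  "N2 = (\<chi> i j. if i = 1 \<and> (j = 2 \<or> j = 4) then 1 else 0)"

lemma N2_app: "N2 *v x = (\<chi> i. if i = 1 then x$2 + x$4 else 0)"
  unfolding N2_def matrix_vector_mult_def vec_eq_iff
proof
  fix i :: 4
  show "(\<chi> i. \<Sum>j\<in>UNIV. (\<chi> i j. if i = 1 \<and> (j = 2 \<or> j = 4) then 1 else 0) $ i $ j * x $ j) $ i =
        (\<chi> i. if i = 1 then x $ 2 + x $ 4 else 0) $ i"
    unfolding UNIV_4 using exhaust_4[of i] d4 by (auto simp: d4)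
qed

lemma N1_sq: "N1 *v (N1 *v v) = 0"
  unfolding N1_app vec_eq_iff using d4 by auto
lemma N2_sq: "N2 *v (N2 *v v) = 0"
  unfolding N2_app vec_eq_iff using d4 by auto

lemma N1_ker: "{v \<in> coord A. N1 *v v = 0} = coord (A - {2,4})"
proof -
  have "N1 *v v = 0 \<longleftrightarrow> v$2 = 0 \<and> v$4 = 0" for v :: "'a^4"
    unfolding N1_app vec_eq_iff forall_4 by (simp add: d4)
  then show ?thesis unfolding coord_def by auto
qed

lemma N2_ker: "\<not> (2 \<in> A \<and> 4 \<in> A) \<Longrightarrow> {v \<in> coord A. N2 *v v = 0} = coord (A - {2,4})"
proof -
  assume A: "\<not> (2 \<in> A \<and> 4 \<in> A)"
  have "N2 *v v = 0 \<longleftrightarrow> v$2 + v$4 = 0" for v :: "'a^4"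
    unfolding N2_app vec_eq_iff forall_4 by (simp add: d4)
  then show ?thesis unfolding coord_def using A by auto
qed



definition fl :: "4 set list \<Rightarrow> nat \<Rightarrow> ('a::field^4) set" where
  "fl L i = coord (if i < 4 then L ! i else UNIV)"

lemma zero_coord: "0 \<in> coord S" by (simp add: coord_def)

lemma flag_fl:
  assumes "distinct [a,b,c::4]"
  shows "complete_flag (fl [{}, {a}, {a,b}, {a,b,c}] :: nat \<Rightarrow> ('a::field^4) set)"
  unfolding complete_flag_def all_le4 all_lt4 using assms
  by (simp add: fl_def coord_sub coord_dim coord_mono coord_empty coord_UNIV card_UNIV4 subset_insertI zero_coord dimUNIV4[where 'a='a] del: vec.dim_UNIV)

lemma kd_sq:
  assumes "\<forall>v. N *v (N *v v) = (0::'a::field^4)"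
  shows "ker_dim N V (Suc (Suc i)) = vec.dim V"
proof -
  have "{v \<in> V. ((\<lambda>x. N *v x) ^^ Suc (Suc i)) v = 0} = V"
    using assms by (simp add: funpow_Suc_right pow_zero del: funpow.simps)
  then show ?thesis unfolding ker_dim_def by simp
qed

lemma JFsq2:
  assumes sq: "\<forall>v. N *v (N *v v) = (0::'a::field^4)" and V: "vec.subspace V"
    and d: "vec.dim V = 2" and k: "vec.dim {v\<in>V. N *v v = 0} = k"
  shows "JF N V = filter (\<lambda>l. 0 < l) [k, 2 - k]"
  unfolding JF2[OF d] kd0[OF V] using kd_sq[OF sq, of V 0] d k
  by (simp add: ker_dim_def numeral_2_eq_2)

lemma JFsq3:
  assumes sq: "\<forall>v. N *v (N *v v) = (0::'a::field^4)" and V: "vec.subspace V"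
    and d: "vec.dim V = 3" and k: "vec.dim {v\<in>V. N *v v = 0} = k"
  shows "JF N V = filter (\<lambda>l. 0 < l) [k, 3 - k, 0]"
  unfolding JF3[OF d] kd0[OF V] using kd_sq[OF sq, of V 0] kd_sq[OF sq, of V 1] d k
  by (simp add: ker_dim_def numeral_2_eq_2 numeral_3_eq_3)

lemma N1_coord: "(2 \<in> A \<longrightarrow> 1 \<in> B) \<Longrightarrow> (4 \<in> A \<longrightarrow> 3 \<in> B) \<Longrightarrow>
   (\<lambda>x. N1 *v x) ` coord A \<subseteq> (coord B :: ('a::field^4) set)"
  unfolding coord_def N1_app by auto

lemma N2_coord: "(2 \<in> A \<or> 4 \<in> A \<longrightarrow> 1 \<in> B) \<Longrightarrow>
   (\<lambda>x. N2 *v x) ` coord A \<subseteq> (coord B :: ('a::field^4) set)"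
  unfolding coord_def N2_app by auto



lemma JF_N1_2: "card S = 2 \<Longrightarrow> JF (N1::'a::field^4^4) (coord S) = filter (\<lambda>l. 0 < l) [card (S - {2,4}), 2 - card (S - {2,4})]"
  by (rule JFsq2) (simp_all add: N1_sq coord_sub coord_dim N1_ker)
lemma JF_N1_3: "card S = 3 \<Longrightarrow> JF (N1::'a::field^4^4) (coord S) = filter (\<lambda>l. 0 < l) [card (S - {2,4}), 3 - card (S - {2,4}), 0]"
  by (rule JFsq3) (simp_all add: N1_sq coord_sub coord_dim N1_ker)
lemma JF_N2_2: "card S = 2 \<Longrightarrow> \<not> (2 \<in> S \<and> 4 \<in> S) \<Longrightarrow> JF (N2::'a::field^4^4) (coord S) = filter (\<lambda>l. 0 < l) [card (S - {2,4}), 2 - card (S - {2,4})]"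
  by (rule JFsq2) (simp_all add: N2_sq coord_sub coord_dim N2_ker)
lemma JF_N2_3: "card S = 3 \<Longrightarrow> \<not> (2 \<in> S \<and> 4 \<in> S) \<Longrightarrow> JF (N2::'a::field^4^4) (coord S) = filter (\<lambda>l. 0 < l) [card (S - {2,4}), 3 - card (S - {2,4}), 0]"
  by (rule JFsq3) (simp_all add: N2_sq coord_sub coord_dim N2_ker)

lemma ex3412:
  "(fl [{}, {1}, {1,2}, {1,2,3}], fl [{}, {3}, {3,4}, {3,4,1}], N1)
     \<in> (Omega (perm_mat (one_line [3,4,1,2])) :: ((nat \<Rightarrow> ('a::field^4) set) \<times> _ \<times> _) set)"
proof -
  have f1: "complete_flag (fl [{}, {1}, {1,2}, {1,2,3}] :: nat \<Rightarrow> ('a^4) set)"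
    by (rule flag_fl) (simp add: d4)
  have f2: "complete_flag (fl [{}, {3}, {3,4}, {3,4,1}] :: nat \<Rightarrow> ('a^4) set)"
    by (rule flag_fl) (simp add: d4)
  have rp: "rel_pos (perm_mat (one_line [3,4,1,2])) (fl [{}, {1}, {1,2}, {1,2,3}]) (fl [{}, {3}, {3,4}, {3,4,1}] :: nat \<Rightarrow> ('a^4) set)"
    unfolding rel_pos_def all_le4 fl_def coord_Int coord_dim
    by (simp add: perm_mat_def one_line_def sum.atLeast_Suc_atMost eval_nat_numeral card_UNIV4 d4)
  have c1: "strictly_compatible N1 (fl [{}, {1}, {1,2}, {1,2,3}] :: nat \<Rightarrow> ('a^4) set)"
    unfolding strictly_compatible_def all_14 fl_def
    by (intro conjI N1_coord; simp add: d4)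
  have c2: "strictly_compatible N1 (fl [{}, {3}, {3,4}, {3,4,1}] :: nat \<Rightarrow> ('a^4) set)"
    unfolding strictly_compatible_def all_14 fl_def
    by (intro conjI N1_coord; simp add: d4)
  show ?thesis unfolding Omega_def using f1 f2 rp c1 c2 by simp
qed

lemma gr3412:
  "growth (fl [{}, {1}, {1,2}, {1,2,3}] :: nat \<Rightarrow> ('a::field^4) set) (fl [{}, {3}, {3,4}, {3,4,1}]) N1 3 3 = [2]
   \<and> growth (fl [{}, {1}, {1,2}, {1,2,3}] :: nat \<Rightarrow> ('a::field^4) set) (fl [{}, {3}, {3,4}, {3,4,1}]) N1 3 4 = [2,1]
   \<and> growth (fl [{}, {1}, {1,2}, {1,2,3}] :: nat \<Rightarrow> ('a::field^4) set) (fl [{}, {3}, {3,4}, {3,4,1}]) N1 4 3 = [2,1]"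
  unfolding growth_def fl_def coord_Int
  by (simp add: JF_N1_2 JF_N1_3 d4)


lemma ex1432:
  "(fl [{}, {1}, {1,2}, {1,2,3}], fl [{}, {1}, {1,4}, {1,4,3}], N2)
     \<in> (Omega (perm_mat (one_line [1,4,3,2])) :: ((nat \<Rightarrow> ('a::field^4) set) \<times> _ \<times> _) set)"
proof -
  have f1: "complete_flag (fl [{}, {1}, {1,2}, {1,2,3}] :: nat \<Rightarrow> ('a^4) set)"
    by (rule flag_fl) (simp add: d4)
  have f2: "complete_flag (fl [{}, {1}, {1,4}, {1,4,3}] :: nat \<Rightarrow> ('a^4) set)"
    by (rule flag_fl) (simp add: d4)
  have rp: "rel_pos (perm_mat (one_line [1,4,3,2])) (fl [{}, {1}, {1,2}, {1,2,3}]) (fl [{}, {1}, {1,4}, {1,4,3}] :: nat \<Rightarrow> ('a^4) set)"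
    unfolding rel_pos_def all_le4 fl_def coord_Int coord_dim
    by (simp add: perm_mat_def one_line_def sum.atLeast_Suc_atMost eval_nat_numeral card_UNIV4 d4)
  have c1: "strictly_compatible N2 (fl [{}, {1}, {1,2}, {1,2,3}] :: nat \<Rightarrow> ('a^4) set)"
    unfolding strictly_compatible_def all_14 fl_def
    by (intro conjI N2_coord; simp add: d4)
  have c2: "strictly_compatible N2 (fl [{}, {1}, {1,4}, {1,4,3}] :: nat \<Rightarrow> ('a^4) set)"
    unfolding strictly_compatible_def all_14 fl_def
    by (intro conjI N2_coord; simp add: d4)
  show ?thesis unfolding Omega_def using f1 f2 rp c1 c2 by simp
qed

lemma gr1432:
  "growth (fl [{}, {1}, {1,2}, {1,2,3}] :: nat \<Rightarrow> ('a::field^4) set) (fl [{}, {1}, {1,4}, {1,4,3}]) N2 3 3 = [2]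
   \<and> growth (fl [{}, {1}, {1,2}, {1,2,3}] :: nat \<Rightarrow> ('a::field^4) set) (fl [{}, {1}, {1,4}, {1,4,3}]) N2 3 4 = [2,1]
   \<and> growth (fl [{}, {1}, {1,2}, {1,2,3}] :: nat \<Rightarrow> ('a::field^4) set) (fl [{}, {1}, {1,4}, {1,4,3}]) N2 4 3 = [2,1]"
  unfolding growth_def fl_def coord_Int
  by (simp add: JF_N2_2 JF_N2_3 d4)

theorem proposition7p23:
  assumes "\<exists>p k. prime (p::nat) \<and> k > 0 \<and> CARD('k::{field,finite}) = p ^ k"
  shows
    "(\<exists>(F, F', N) \<in> (Omega (perm_mat (one_line [3,4,1,2])) :: ((nat \<Rightarrow> ('k^4) set) \<times> _ \<times> _) set).
        growth F F' N 3 3 = [2] \<and> growth F F' N 3 4 = [2,1] \<and> growth F F' N 4 3 = [2,1])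
   \<and> (\<forall>(F, F', N) \<in> (Omega (perm_mat (one_line [3,4,1,2])) :: ((nat \<Rightarrow> ('k^4) set) \<times> _ \<times> _) set).
        growth F F' N 3 3 = [2] \<and> growth F F' N 3 4 = [2,1] \<and> growth F F' N 4 3 = [2,1]
        \<longrightarrow> growth F F' N 4 4 = [2,2])
   \<and> (\<exists>(F, F', N) \<in> (Omega (perm_mat (one_line [1,4,3,2])) :: ((nat \<Rightarrow> ('k^4) set) \<times> _ \<times> _) set).
        growth F F' N 3 3 = [2] \<and> growth F F' N 3 4 = [2,1] \<and> growth F F' N 4 3 = [2,1])
   \<and> (\<forall>(F, F', N) \<in> (Omega (perm_mat (one_line [1,4,3,2])) :: ((nat \<Rightarrow> ('k^4) set) \<times> _ \<times> _) set).
        growth F F' N 3 3 = [2] \<and> growth F F' N 3 4 = [2,1] \<and> growth F F' N 4 3 = [2,1]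
        \<longrightarrow> growth F F' N 4 4 = [3,1])"
proof -
  have P1: "\<exists>(F, F', N) \<in> (Omega (perm_mat (one_line [3,4,1,2])) :: ((nat \<Rightarrow> ('k^4) set) \<times> _ \<times> _) set).
        growth F F' N 3 3 = [2] \<and> growth F F' N 3 4 = [2,1] \<and> growth F F' N 4 3 = [2,1]"
    using ex3412[where 'a='k] gr3412[where 'a='k] by blast
  have P2: "\<forall>(F, F', N) \<in> (Omega (perm_mat (one_line [3,4,1,2])) :: ((nat \<Rightarrow> ('k^4) set) \<times> _ \<times> _) set).
        growth F F' N 3 3 = [2] \<and> growth F F' N 3 4 = [2,1] \<and> growth F F' N 4 3 = [2,1]
        \<longrightarrow> growth F F' N 4 4 = [2,2]"
    using univ3412 by blast
  have P3: "\<exists>(F, F', N) \<in> (Omega (perm_mat (one_line [1,4,3,2])) :: ((nat \<Rightarrow> ('k^4) set) \<times> _ \<times> _) set).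
        growth F F' N 3 3 = [2] \<and> growth F F' N 3 4 = [2,1] \<and> growth F F' N 4 3 = [2,1]"
    using ex1432[where 'a='k] gr1432[where 'a='k] by blast
  have P4: "\<forall>(F, F', N) \<in> (Omega (perm_mat (one_line [1,4,3,2])) :: ((nat \<Rightarrow> ('k^4) set) \<times> _ \<times> _) set).
        growth F F' N 3 3 = [2] \<and> growth F F' N 3 4 = [2,1] \<and> growth F F' N 4 3 = [2,1]
        \<longrightarrow> growth F F' N 4 4 = [3,1]"
    using univ1432 by blast
  show ?thesis using P1 P2 P3 P4 by blast
qed

end
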